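(* For any reals $\underline{w},\overline{w},B$ with $0<\underline{w}\le\overline{w}\le B$, there exist a hospital $h$ with budget $B_h=B$, a finite set $X_h$ of contracts of $h$ whose minimum wage is $\underline{w}$ and maximum wage is $\overline{w}$, and an additive utility function $f_h$ on $X_h$ with nonnegative values, such that every choice function $\mathrm{Ch}_h:2^{X_h}\to2^{X_h}$ satisfying LAD and COM has $w_h(\mathrm{Ch}_h(X'))>\overline{w}\cdot(B-\overline{w})/\underline{w}$ for some $X'\subseteq X_h$.
   Context: A contract of hospital $h$ is $x=(d,h,w)$ with doctor $d$ and wage $x_W=w>0$. For $Y\subseteq X_h$, $w_h(Y)=\sum_{x\in Y}x_W$ and the additive utility is $f_h(Y)=\sum_{x\in Y}f_h(x)$. A choice function is a map $\mathrm{Ch}_h:2^{X_h}\to2^{X_h}$ with $\mathrm{Ch}_h(Y)\subseteq Y$. LAD: for all $Y''\subseteq Y'\subseteq X_h$, $|\mathrm{Ch}_h(Y'')|\le|\mathrm{Ch}_h(Y')|$. COM: for all $Y''\subseteq Y'\subseteq X_h$ with $w_h(Y'')\le\max\{B_h,w_h(\mathrm{Ch}_h(Y'))\}$, $f_h(\mathrm{Ch}_h(Y'))\ge f_h(Y'')$. *)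

theory Defs
  imports Complex_Main
begin

type_synonym contract = "nat \<times> nat \<times> real"

definition doctor :: "contract \<Rightarrow> nat" where "doctor x = fst x"
definition hosp :: "contract \<Rightarrow> nat" where "hosp x = fst (snd x)"
definition wage :: "contract \<Rightarrow> real" where "wage x = snd (snd x)"

definition wsum :: "contract set \<Rightarrow> real" where "wsum Y = (\<Sum>x\<in>Y. wage x)"

definition util :: "(contract \<Rightarrow> real) \<Rightarrow> contract set \<Rightarrow> real" where
  "util f Y = (\<Sum>x\<in>Y. f x)"

definition is_choice :: "contract set \<Rightarrow> (contract set \<Rightarrow> contract set) \<Rightarrow> bool" where
  "is_choice X Ch \<longleftrightarrow> (\<forall>Y. Y \<subseteq> X \<longrightarrow> Ch Y \<subseteq> Y)"

definition LAD :: "contract set \<Rightarrow> (contract set \<Rightarrow> contract set) \<Rightarrow> bool" where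
  "LAD X Ch \<longleftrightarrow> (\<forall>Y'' Y'. Y'' \<subseteq> Y' \<and> Y' \<subseteq> X \<longrightarrow> card (Ch Y'') \<le> card (Ch Y'))"

definition COM :: "contract set \<Rightarrow> real \<Rightarrow> (contract \<Rightarrow> real) \<Rightarrow> (contract set \<Rightarrow> contract set) \<Rightarrow> bool" where
  "COM X B f Ch \<longleftrightarrow> (\<forall>Y'' Y'. Y'' \<subseteq> Y' \<and> Y' \<subseteq> X \<and> wsum Y'' \<le> max B (wsum (Ch Y'))
      \<longrightarrow> util f (Ch Y') \<ge> util f Y'')"

end

theory Submission
  imports Defs
begin

lemma wsum_const: "(\<And>x. x \<in> Y \<Longrightarrow> wage x = c) \<Longrightarrow> wsum Y = real (card Y) * c"
  unfolding wsum_def by simp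

lemma util_const: "(\<And>x. x \<in> Y \<Longrightarrow> f x = c) \<Longrightarrow> util f Y = real (card Y) * c"
  unfolding util_def by simp

theorem theorem4:
  fixes wl wu B :: real
  assumes "0 < wl" and "wl \<le> wu" and "wu \<le> B"
  shows "\<exists>(h::nat) (X::contract set) (f::contract \<Rightarrow> real).
           finite X \<and> X \<noteq> {} \<and> (\<forall>x\<in>X. hosp x = h \<and> wage x > 0) \<and>
           Min (wage ` X) = wl \<and> Max (wage ` X) = wu \<and>
           (\<forall>x\<in>X. f x \<ge> 0) \<and>
           (\<forall>Ch. is_choice X Ch \<and> LAD X Ch \<and> COM X B f Ch \<longrightarrow>
              (\<exists>X'. X' \<subseteq> X \<and> wsum (Ch X') > wu * (B - wu) / wl))"
proof -
  define n where "n = nat (floor (B / wl))"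
  have Bwl: "1 \<le> B / wl" using assms by simp
  have n1: "n \<ge> 1" unfolding n_def using Bwl by linarith
  have nle: "real n * wl \<le> B"
  proof -
    have "real n \<le> B / wl" unfolding n_def using Bwl by linarith
    thus ?thesis using assms(1) by (simp add: pos_le_divide_eq)
  qed
  have ngt: "(real n + 1) * wl > B"
  proof -
    have "real n + 1 > B / wl" unfolding n_def using Bwl by linarith
    thus ?thesis using assms(1) by (simp add: pos_divide_less_eq)
  qed
  define L :: "contract set" where "L = (\<lambda>i. (i,0,wl)) ` {..<n}"
  define H :: "contract set" where "H = (\<lambda>i. (n+i,0,wu)) ` {..<n}"
  define X where "X = L \<union> H"
  define f :: "contract \<Rightarrow> real" where "f x = (if fst x < n then 1 else real n + 1)" for x
  have finL: "finite L" and finH: "finite H" unfolding L_def H_def by auto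
  have cardL: "card L = n" unfolding L_def by (subst card_image) (auto simp: inj_on_def)
  have cardH: "card H = n" unfolding H_def by (subst card_image) (auto simp: inj_on_def)
  have disj: "L \<inter> H = {}" unfolding L_def H_def by auto
  have wL: "\<And>x. x \<in> L \<Longrightarrow> wage x = wl" unfolding L_def wage_def by auto
  have wH: "\<And>x. x \<in> H \<Longrightarrow> wage x = wu" unfolding H_def wage_def by auto
  have fL: "\<And>x. x \<in> L \<Longrightarrow> f x = 1" unfolding L_def f_def by auto
  have fH: "\<And>x. x \<in> H \<Longrightarrow> f x = real n + 1" unfolding H_def f_def by auto
  have Lne: "(0,0,wl) \<in> L" unfolding L_def using n1 by auto
  have Hne: "(n,0,wu) \<in> H" unfolding H_def using n1 by force
  have imgX: "wage ` X = {wl, wu}"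
  proof
    show "wage ` X \<subseteq> {wl, wu}" unfolding X_def using wL wH by auto
    show "{wl, wu} \<subseteq> wage ` X" unfolding X_def using Lne Hne wL wH
      by (metis Un_iff empty_subsetI image_eqI insert_subset)
  qed
  have main: "\<exists>X'. X' \<subseteq> X \<and> wsum (Ch X') > wu * (B - wu) / wl"
    if ch: "is_choice X Ch" and lad: "LAD X Ch" and com: "COM X B f Ch" for Ch
  proof -
    have ChL: "Ch L \<subseteq> L" using ch unfolding is_choice_def X_def by auto
    have "util f (Ch L) \<ge> util f L"
      using com nle unfolding COM_def X_def
      by (metis Un_upper1 order_refl wsum_const wL cardL max.coboundedI1)
    moreover have "util f (Ch L) = real (card (Ch L))"
      using util_const[of "Ch L" f 1] fL ChL by auto
    moreover have "util f L = real n" using util_const[of L f 1] fL cardL by auto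
    ultimately have c1: "card (Ch L) \<ge> n" by simp
    have "card (Ch L) \<le> card (Ch X)" using lad unfolding LAD_def X_def by auto
    define C where "C = Ch X"
    have CX: "C \<subseteq> X" using ch unfolding is_choice_def C_def by auto
    define CL where "CL = C \<inter> L"
    define CH where "CH = C \<inter> H"
    have finCL: "finite CL" and finCH: "finite CH" using finL finH CL_def CH_def by auto
    have Cu: "C = CL \<union> CH" using CX unfolding CL_def CH_def X_def by auto
    have dCLH: "CL \<inter> CH = {}" using disj CL_def CH_def by auto
    have cardC: "card C = card CL + card CH" using Cu dCLH finCL finCH card_Un_disjoint by metis
    have cn: "card CL + card CH \<ge> n" using c1 \<open>card (Ch L) \<le> card (Ch X)\<close> cardC C_def by auto
    have wCL: "wsum CL = real (card CL) * wl" using wsum_const[of CL wl] wL CL_def by auto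
    have wCH: "wsum CH = real (card CH) * wu" using wsum_const[of CH wu] wH CH_def by auto
    have wC: "wsum C = real (card CL) * wl + real (card CH) * wu"
      unfolding Cu wsum_def using finCL finCH dCLH wCL wCH unfolding wsum_def
      by (simp add: sum.union_disjoint)
    have uC: "util f C = real (card CL) + real (card CH) * (real n + 1)"
      unfolding Cu util_def using finCL finCH dCLH
        util_const[of CL f 1] util_const[of CH f "real n + 1"] fL fH CL_def CH_def
      unfolding util_def by (simp add: sum.union_disjoint)
    have CLn: "card CL \<le> n" using card_mono[OF finL] cardL CL_def by (metis inf_le2)
    have CHn: "card CH \<le> n" using card_mono[OF finH] cardH CH_def by (metis inf_le2)
    have key: "card CH = n \<or> real (card CL) * wl < wu"
    proof (rule ccontr)
      assume a: "\<not> ?thesis"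
      hence "card CH < n" and b: "real (card CL) * wl \<ge> wu" using CHn by auto
      hence "CH \<noteq> H" using cardH by auto
      then obtain h where h: "h \<in> H" "h \<notin> CH" using CH_def by blast
      define Y where "Y = insert h CH"
      have finY: "finite Y" using finCH Y_def by auto
      have YX: "Y \<subseteq> X" using h CX CH_def Y_def X_def by auto
      have cY: "card Y = card CH + 1" using h finCH Y_def by auto
      have wY: "wsum Y = real (card Y) * wu" using wsum_const[of Y wu] wH h CH_def Y_def by auto
      have uY: "util f Y = real (card Y) * (real n + 1)"
        using util_const[of Y f "real n + 1"] fH h CH_def Y_def by auto
      have "wsum Y \<le> wsum C" using wY wC cY b by (simp add: algebra_simps)
      hence "util f C \<ge> util f Y" using com YX unfolding COM_def C_def by auto
      hence "real (card CL) \<ge> real n + 1" using uY uC cY by (simp add: algebra_simps)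
      thus False using CLn by simp
    qed
    have "wsum C * wl > wu * (B - wu)"
      using key
    proof
      assume "card CH = n"
      hence "wsum C \<ge> real n * wu" using wC assms by simp
      hence "wsum C * wl \<ge> real n * wl * wu" using assms by (simp add: mult_right_mono algebra_simps)
      moreover have "real n * wl * wu > (B - wu) * wu" using ngt assms
        by (intro mult_strict_right_mono) (auto simp: algebra_simps)
      ultimately show ?thesis by (simp add: algebra_simps)
    next
      assume k: "real (card CL) * wl < wu"
      define j where "j = real (card CL)"
      define c where "c = real (card CH)"
      have cj: "c \<ge> real n - j" using cn j_def c_def by simp
      have W: "wsum C = j * wl + c * wu" using wC j_def c_def by simp
      have "c * wu \<ge> (real n - j) * wu" using cj assms by (intro mult_right_mono) auto
      hence W1: "wsum C \<ge> real n * wu - j * (wu - wl)" using W by (simp add: algebra_simps)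
      have "j * wl * (wu - wl) \<le> wu * (wu - wl)" using k j_def assms
        by (intro mult_right_mono) auto
      have "real n * wl * wu - wu * (wu - wl) \<le> real n * wl * wu - j * wl * (wu - wl)"
        using \<open>j * wl * (wu - wl) \<le> wu * (wu - wl)\<close> by simp
      also have "... = (real n * wu - j * (wu - wl)) * wl" by (simp add: algebra_simps)
      also have "... \<le> wsum C * wl" using W1 assms
        by (intro mult_right_mono) auto
      finally have A: "wsum C * wl \<ge> wu * (real n * wl + wl - wu)" by (simp add: algebra_simps)
      have "wu * (real n * wl + wl - wu) > wu * (B - wu)" using ngt assms
        by (intro mult_strict_left_mono) (auto simp: algebra_simps)
      thus ?thesis using A by simp
    qed
    hence "wsum C > wu * (B - wu) / wl" using assms by (simp add: pos_divide_less_eq)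
    thus ?thesis using C_def by (auto simp: X_def)
  qed
  have finX: "finite X" using finL finH X_def by auto
  have "Min (wage ` X) = wl" using imgX assms by simp
  moreover have "Max (wage ` X) = wu" using imgX assms by simp
  moreover have "\<forall>x\<in>X. hosp x = 0 \<and> wage x > 0"
    unfolding X_def L_def H_def using assms by (auto simp: hosp_def wage_def)
  moreover have "\<forall>x\<in>X. f x \<ge> 0" by (simp add: f_def)
  moreover have "X \<noteq> {}" using Lne X_def by auto
  ultimately show ?thesis using finX main by blast
qed

end
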